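(* Let $f(x)=\sum_{i=1}^Bp_i\|x_{(i)}\|$ with $p_i>0$, where $x=(x_{(1)},\dots,x_{(B)})$, $x_{(i)}\in\mathbb{R}^{n_i}$, $\sum_in_i=n$, and let $g:\mathbb{R}^n\to\mathbb{R}$ be differentiable and strongly convex. Consider $\min_{x}f(x)$ s.t. $g(x)\le0$. Assume there is $\tilde x$ with $g(\tilde x)<0$, and that every minimizer $x_0^*$ of $f$ over $\mathbb{R}^n$ satisfies $g(x_0^* )>0$. Then the KKT point of this problem is unique, i.e. there is exactly one pair $(x^*,y^* )\in\mathbb{R}^n\times\mathbb{R}_+$ with $0\in\partial f(x^* )+y^*\nabla g(x^* )$ and $y^*g(x^* )=0$.
   Context: $\|\cdot\|$ is the Euclidean norm; $\partial f$ is the convex subdifferential. *)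

theory Defs
  imports "HOL-Analysis.Analysis"
begin

definition subdiff :: "('a::real_inner \<Rightarrow> real) \<Rightarrow> 'a \<Rightarrow> 'a set" where
  "subdiff f x = {s. \<forall>z. f z \<ge> f x + s \<bullet> (z - x)}"

definition strongly_convex :: "('a::real_normed_vector \<Rightarrow> real) \<Rightarrow> bool" where
  "strongly_convex g \<longleftrightarrow> (\<exists>mu>0. \<forall>x y t. 0 \<le> t \<and> t \<le> 1 \<longrightarrow>
      g (t *\<^sub>R x + (1 - t) *\<^sub>R y) \<le> t * g x + (1 - t) * g y - mu / 2 * t * (1 - t) * (norm (x - y))\<^sup>2)"

definition grad :: "('a::real_inner \<Rightarrow> real) \<Rightarrow> 'a \<Rightarrow> 'a" where
  "grad g x = (SOME G. (g has_derivative (\<lambda>h. G \<bullet> h)) (at x))"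

text \<open>Euclidean norm of the i-th block x_(i), where blk j is the block of coordinate j.\<close>
definition block_norm :: "('n::finite \<Rightarrow> nat) \<Rightarrow> nat \<Rightarrow> real ^ 'n \<Rightarrow> real" where
  "block_norm blk i x = sqrt (\<Sum>j\<in>{j. blk j = i}. (x $ j)\<^sup>2)"

definition kkt_point :: "('a::real_inner \<Rightarrow> real) \<Rightarrow> ('a \<Rightarrow> real) \<Rightarrow> 'a \<Rightarrow> real \<Rightarrow> bool" where
  "kkt_point f g x y \<longleftrightarrow> y \<ge> 0 \<and> g x \<le> 0 \<and>
      0 \<in> (\<lambda>s. s + y *\<^sub>R grad g x) ` subdiff f x \<and> y * g x = 0"

end

theory Submission
  imports Defs
begin

lemma grad_works:
  fixes g :: "'a::euclidean_space \<Rightarrow> real"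
  assumes "g differentiable (at x)"
  shows "(g has_derivative (\<lambda>h. grad g x \<bullet> h)) (at x)"
proof -
  obtain D where D: "(g has_derivative D) (at x)" using assms differentiable_def by blast
  have lin: "linear D" using D has_derivative_linear by blast
  define G where "G = (\<Sum>i\<in>Basis. D i *\<^sub>R i)"
  have "D h = G \<bullet> h" for h
  proof -
    have "D h * 1 = (\<Sum>i\<in>Basis. (h \<bullet> i) * (D i * 1))"
      using Linear_Algebra.linear_componentwise[OF lin, of h 1] by simp
    then show ?thesis by (simp add: G_def inner_sum_right inner_commute mult.commute)
  qed
  then have "D = (\<lambda>h. G \<bullet> h)" by auto
  with D have "\<exists>G. (g has_derivative (\<lambda>h. G \<bullet> h)) (at x)" by auto
  then show ?thesis unfolding grad_def by (rule someI_ex)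
qed

lemma line_deriv:
  fixes g :: "'a::euclidean_space \<Rightarrow> real"
  assumes "(g has_derivative (\<lambda>h. G \<bullet> h)) (at x)"
  shows "((\<lambda>t. g (x + t *\<^sub>R w)) has_real_derivative (G \<bullet> w)) (at 0)"
proof -
  have l: "((\<lambda>t::real. x + t *\<^sub>R w) has_derivative (\<lambda>t. t *\<^sub>R w)) (at 0)"
    by (auto intro!: derivative_eq_intros)
  have g': "(g has_derivative (\<lambda>h. G \<bullet> h)) (at ((\<lambda>t::real. x + t *\<^sub>R w) 0))"
    using assms by simp
  have "((g \<circ> (\<lambda>t::real. x + t *\<^sub>R w)) has_derivative ((\<lambda>h. G \<bullet> h) \<circ> (\<lambda>t. t *\<^sub>R w))) (at 0)"
    by (rule diff_chain_at[OF l g'])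
  moreover have "((\<lambda>h. G \<bullet> h) \<circ> (\<lambda>t. t *\<^sub>R w)) = (*) (G \<bullet> w)"
    by (auto simp: fun_eq_iff)
  ultimately show ?thesis unfolding has_field_derivative_def by (simp add: o_def)
qed

lemma grad_ineq:
  fixes g :: "'a::euclidean_space \<Rightarrow> real"
  assumes cv: "convex_on UNIV g" and d: "(g has_derivative (\<lambda>h. G \<bullet> h)) (at x)"
  shows "g z \<ge> g x + G \<bullet> (z - x)"
proof -
  define \<phi> where "\<phi> = (\<lambda>t. g (x + t *\<^sub>R (z - x)))"
  have D: "(\<phi> has_real_derivative (G \<bullet> (z - x))) (at 0)"
    unfolding \<phi>_def by (rule line_deriv[OF d])
  have c: "convex_on UNIV \<phi>"
  proof (rule convex_onI)
    fix t a b :: real assume t: "0 < t" "t < 1"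
    have "x + ((1 - t) * a + t * b) *\<^sub>R (z - x) = (1 - t) *\<^sub>R (x + a *\<^sub>R (z - x)) + t *\<^sub>R (x + b *\<^sub>R (z - x))"
      by (simp add: algebra_simps)
    then show "\<phi> ((1 - t) *\<^sub>R a + t *\<^sub>R b) \<le> (1 - t) * \<phi> a + t * \<phi> b"
      unfolding \<phi>_def using t convex_onD[OF cv, of t "x + a *\<^sub>R (z - x)" "x + b *\<^sub>R (z - x)"]
      by simp
  qed simp
  have "\<phi> 1 - \<phi> 0 \<ge> (G \<bullet> (z - x)) * (1 - 0)"
    by (rule convex_on_imp_above_tangent[OF c]) (use D in \<open>auto\<close>)
  then show ?thesis unfolding \<phi>_def by simp
qed

context
  fixes f g :: "'a::euclidean_space \<Rightarrow> real" and xt :: 'a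
  assumes hom: "\<And>c x. f (c *\<^sub>R x) = \<bar>c\<bar> * f x"
    and sub: "\<And>x y. f (x + y) \<le> f x + f y"
    and pos0: "\<And>x. f x = 0 \<Longrightarrow> x = 0"
    and fcont: "continuous_on UNIV f"
    and gd: "\<And>x. g differentiable (at x)"
    and gsc: "strongly_convex g"
    and slt: "g xt < 0"
    and g0: "g 0 > 0"
begin

lemma f0: "f 0 = 0"
  using hom[of 0 0] by simp

lemma fnn: "f x \<ge> 0"
proof -
  have "f 0 \<le> f x + f (- x)" using sub[of x "-x"] by simp
  moreover have "f (- x) = f x" using hom[of "-1" x] by simp
  ultimately show ?thesis using f0 by simp
qed

lemma fpos: "x \<noteq> 0 \<Longrightarrow> f x > 0"
  using fnn[of x] pos0[of x] by force

lemma fconv: "convex_on UNIV f"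
proof (rule convex_onI)
  fix x y :: 'a and t :: real assume t: "0 < t" "t < 1"
  have "f ((1 - t) *\<^sub>R x + t *\<^sub>R y) \<le> f ((1 - t) *\<^sub>R x) + f (t *\<^sub>R y)" by (rule sub)
  also have "\<dots> = (1 - t) * f x + t * f y" using t by (simp add: hom)
  finally show "f ((1 - t) *\<^sub>R x + t *\<^sub>R y) \<le> (1 - t) * f x + t * f y" .
qed simp

lemma gsc': obtains mu where "mu > 0" "\<And>x y t. 0 \<le> t \<Longrightarrow> t \<le> 1 \<Longrightarrow>
      g (t *\<^sub>R x + (1 - t) *\<^sub>R y) \<le> t * g x + (1 - t) * g y - mu / 2 * t * (1 - t) * (norm (x - y))\<^sup>2"
  using gsc unfolding strongly_convex_def by blast

lemma gconv: "convex_on UNIV g"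
proof -
  obtain mu where mu: "mu > 0" "\<And>x y t. 0 \<le> t \<Longrightarrow> t \<le> 1 \<Longrightarrow>
      g (t *\<^sub>R x + (1 - t) *\<^sub>R y) \<le> t * g x + (1 - t) * g y - mu / 2 * t * (1 - t) * (norm (x - y))\<^sup>2"
    using gsc' by blast
  show ?thesis
  proof (rule convex_onI)
    fix x y :: 'a and t :: real assume t: "0 < t" "t < 1"
    have "mu / 2 * (1 - t) * t * (norm (x - y))\<^sup>2 \<ge> 0" using mu t by simp
    then show "g ((1 - t) *\<^sub>R x + t *\<^sub>R y) \<le> (1 - t) * g x + t * g y"
      using mu(2)[of "1 - t" x y] t by simp
  qed simp
qed

lemma gder: "(g has_derivative (\<lambda>h. grad g x \<bullet> h)) (at x)"
  using grad_works gd by blast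

lemma gineq: "g z \<ge> g x + grad g x \<bullet> (z - x)"
  using grad_ineq[OF gconv gder] .

lemma globmin: assumes "\<forall>z. f x \<le> f z" shows "g x > 0"
proof -
  have "f x \<le> 0" using assms f0 by metis
  then have "x = 0" using fnn[of x] pos0 by force
  then show ?thesis using g0 by simp
qed

lemma interior_min:
  assumes gx: "g x < 0" and mn: "\<forall>z. g z \<le> 0 \<longrightarrow> f x \<le> f z"
  shows False
proof -
  have "f x \<le> f z" for z
  proof -
    define a where "a = - g x"
    define b where "b = \<bar>g z\<bar>"
    define t where "t = a / (a + b)"
    have a: "a > 0" using gx a_def by simp
    have b: "b \<ge> 0" using b_def by simp
    have t: "0 < t" "t \<le> 1" using a b by (auto simp: t_def)
    have tb: "t * (a + b) = a" using a b by (simp add: t_def)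
    define w where "w = (1 - t) *\<^sub>R x + t *\<^sub>R z"
    have "g w \<le> (1 - t) * g x + t * g z"
      unfolding w_def using convex_onD[OF gconv, of t x z] t by simp
    also have "\<dots> \<le> (1 - t) * g x + t * b" using t by (simp add: b_def)
    also have "\<dots> = 0" using tb by (simp add: a_def algebra_simps)
    finally have "f x \<le> f w" using mn by simp
    also have "f w \<le> (1 - t) * f x + t * f z"
      unfolding w_def using convex_onD[OF fconv, of t x z] t by simp
    finally have "t * f x \<le> t * f z" by (simp add: algebra_simps)
    then show ?thesis using t by simp
  qed
  then have "g x > 0" using globmin by blast
  then show False using gx by simp
qed

lemma kkt_props:
  assumes "kkt_point f g x y"
  shows "y > 0" "g x = 0" "\<forall>z. g z \<le> 0 \<longrightarrow> f x \<le> f z"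
    and "y = - f x / (grad g x \<bullet> x)"
proof -
  from assms have y0: "y \<ge> 0" and gx: "g x \<le> 0" and yg: "y * g x = 0"
    and "0 \<in> (\<lambda>s. s + y *\<^sub>R grad g x) ` subdiff f x"
    unfolding kkt_point_def by auto
  then obtain s where s: "s \<in> subdiff f x" and s0: "s + y *\<^sub>R grad g x = 0" by auto
  have sd: "f z \<ge> f x + s \<bullet> (z - x)" for z using s unfolding subdiff_def by auto
  have se: "s = - (y *\<^sub>R grad g x)" using s0 by (simp add: eq_neg_iff_add_eq_0)
  have key: "f z \<ge> f x - y * g z" for z
  proof -
    have "f z \<ge> f x - y * (grad g x \<bullet> (z - x))" using sd[of z] se by simp
    moreover have "y * (grad g x \<bullet> (z - x)) \<le> y * (g z - g x)"
      using gineq[of x z] y0 by (intro mult_left_mono) auto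
    ultimately show ?thesis using yg by (simp add: algebra_simps)
  qed
  show mn: "\<forall>z. g z \<le> 0 \<longrightarrow> f x \<le> f z"
  proof (intro allI impI)
    fix z assume "g z \<le> 0"
    then have "y * g z \<le> 0" using y0 by (simp add: mult_nonneg_nonpos)
    then show "f x \<le> f z" using key[of z] by simp
  qed
  show yp: "y > 0"
  proof (rule ccontr)
    assume "\<not> y > 0"
    then have "y = 0" using y0 by simp
    then have "\<forall>z. f x \<le> f z" using key by simp
    then have "g x > 0" by (rule globmin)
    then show False using gx by simp
  qed
  show gx0: "g x = 0" using yg yp by simp
  have "f 0 \<ge> f x + s \<bullet> (0 - x)" by (rule sd)
  then have A: "s \<bullet> x \<ge> f x" using f0 by simp
  have "f (2 *\<^sub>R x) \<ge> f x + s \<bullet> (2 *\<^sub>R x - x)" by (rule sd)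
  then have B: "s \<bullet> x \<le> f x" using hom[of 2 x] by (simp add: algebra_simps)
  have sx: "- y * (grad g x \<bullet> x) = f x" using A B se by simp
  have "x \<noteq> 0" using gx0 g0 by auto
  then have "f x > 0" by (rule fpos)
  then have "grad g x \<bullet> x \<noteq> 0" using sx by auto
  then show "y = - f x / (grad g x \<bullet> x)" using sx by (simp add: field_simps)
qed


lemma gcont: "continuous_on UNIV g"
  using gd by (simp add: differentiable_imp_continuous_within continuous_at_imp_continuous_on)

lemma Kbounded: obtains R where "\<And>z. g z \<le> 0 \<Longrightarrow> norm z \<le> R"
proof -
  obtain mu where mu: "mu > 0" "\<And>x y t. 0 \<le> t \<Longrightarrow> t \<le> 1 \<Longrightarrow>
      g (t *\<^sub>R x + (1 - t) *\<^sub>R y) \<le> t * g x + (1 - t) * g y - mu / 2 * t * (1 - t) * (norm (x - y))\<^sup>2"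
    using gsc' by blast
  define G where "G = grad g 0"
  define R where "R = 4 * norm G / mu"
  have "norm z \<le> R" if gz: "g z \<le> 0" for z
  proof -
    have A: "g ((1/2) *\<^sub>R z) \<le> g z / 2 + g 0 / 2 - mu / 8 * (norm z)\<^sup>2"
      using mu(2)[of "1/2" z 0] by simp
    have B: "g ((1/2) *\<^sub>R z) \<ge> g 0 + G \<bullet> ((1/2) *\<^sub>R z)"
      using gineq[of 0 "(1/2) *\<^sub>R z"] by (simp add: G_def)
    have C: "G \<bullet> z \<ge> - (norm G * norm z)"
      using norm_cauchy_schwarz[of "-G" z] by simp
    have D: "mu / 8 * (norm z)\<^sup>2 \<le> norm G * norm z / 2"
      using A B C gz g0 by (simp add: inner_scaleR_right)
    show ?thesis
    proof (rule ccontr)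
      assume "\<not> norm z \<le> R"
      then have nz: "norm z > R" by simp
      have "R \<ge> 0" using mu by (simp add: R_def)
      then have "mu / 8 * norm z * R < mu / 8 * norm z * norm z"
        using nz mu \<open>R \<ge> 0\<close> by (intro mult_strict_left_mono) (auto intro!: mult_pos_pos)
      moreover have "mu / 8 * norm z * R = norm G * norm z / 2"
        using mu by (simp add: R_def field_simps)
      moreover have "mu / 8 * norm z * norm z = mu / 8 * (norm z)\<^sup>2"
        by (simp add: power2_eq_square)
      ultimately have "norm G * norm z / 2 < mu / 8 * (norm z)\<^sup>2"
        by linarith
      then show False using D by linarith
    qed
  qed
  then show ?thesis using that by blast
qed

lemma kkt_exists: "\<exists>x y. kkt_point f g x y"
proof -
  define K where "K = {z. g z \<le> 0}"
  obtain R where R: "\<And>z. g z \<le> 0 \<Longrightarrow> norm z \<le> R" using Kbounded by blast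
  have "closed K" unfolding K_def
    by (rule closed_Collect_le) (use gcont in auto)
  moreover have "bounded K"
    unfolding bounded_iff K_def using R by blast
  ultimately have "compact K" by (simp add: compact_eq_bounded_closed)
  moreover have "K \<noteq> {}" using slt less_imp_le unfolding K_def by blast
  moreover have "continuous_on K f" using fcont continuous_on_subset by blast
  ultimately obtain xs where xsK: "xs \<in> K" and xsmin: "\<forall>z\<in>K. f xs \<le> f z"
    using continuous_attains_inf by blast
  have mn: "\<forall>z. g z \<le> 0 \<longrightarrow> f xs \<le> f z" using xsmin K_def by auto
  have gxs: "g xs = 0"
    using xsK interior_min[OF _ mn] K_def by force
  define d where "d = grad g xs"
  have "d \<noteq> 0"
  proof
    assume "d = 0"
    then have "g xt \<ge> 0" using gineq[of xs xt] gxs d_def by simp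
    then show False using slt by simp
  qed
  have xs0: "xs \<noteq> 0" using gxs g0 by auto
  have fxs: "f xs > 0" using fpos[OF xs0] .
  have C: "f xs \<le> f (xs + w)" if dw: "d \<bullet> w < 0" for w
  proof -
    have "((\<lambda>t. g (xs + t *\<^sub>R w)) has_real_derivative (d \<bullet> w)) (at 0)"
      unfolding d_def by (rule line_deriv[OF gder])
    from DERIV_neg_dec_right[OF this dw] obtain e where e: "e > 0"
      and he: "\<And>h. h > 0 \<Longrightarrow> h < e \<Longrightarrow> g (xs + (0 + h) *\<^sub>R w) < g (xs + 0 *\<^sub>R w)"
      by blast
    define h where "h = min (e/2) 1"
    have h: "h > 0" "h < e" "h \<le> 1" using e by (auto simp: h_def)
    have "g (xs + h *\<^sub>R w) < 0" using he[OF h(1,2)] gxs by simp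
    then have "f xs \<le> f (xs + h *\<^sub>R w)" using mn by simp
    also have "xs + h *\<^sub>R w = (1 - h) *\<^sub>R xs + h *\<^sub>R (xs + w)" by (simp add: algebra_simps)
    also have "f \<dots> \<le> (1 - h) * f xs + h * f (xs + w)"
      using convex_onD[OF fconv, of h xs "xs + w"] h by simp
    finally have "h * f xs \<le> h * f (xs + w)" by (simp add: algebra_simps)
    then show ?thesis using h by simp
  qed
  have C': "f xs \<le> f z" if "d \<bullet> z < d \<bullet> xs" for z
    using C[of "z - xs"] that by (simp add: inner_diff_right)
  define c where "c = d \<bullet> xs"
  have cneg: "c < 0"
  proof (rule ccontr)
    assume "\<not> c < 0"
    then have c0: "c \<ge> 0" by simp
    have fd: "f d > 0" using fpos[OF \<open>d \<noteq> 0\<close>] .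
    define \<epsilon> where "\<epsilon> = f xs / (2 * f d)"
    have ep: "\<epsilon> > 0" using fd fxs by (simp add: \<epsilon>_def)
    have "d \<bullet> ((- \<epsilon>) *\<^sub>R d) = - \<epsilon> * (d \<bullet> d)" by simp
    also have "\<dots> < 0" using ep \<open>d \<noteq> 0\<close> by simp
    finally have "f xs \<le> f ((- \<epsilon>) *\<^sub>R d)" using C' c0 c_def by simp
    also have "\<dots> = \<epsilon> * f d" using ep hom[of "- \<epsilon>" d] by simp
    also have "\<dots> = f xs / 2" using fd by (simp add: \<epsilon>_def)
    finally show False using fxs by simp
  qed
  define y where "y = f xs / (- c)"
  have yp: "y > 0" using fxs cneg unfolding y_def by (intro divide_pos_pos) auto
  have main: "- y * (d \<bullet> z) \<le> f z" for z
  proof (cases "d \<bullet> z \<ge> 0")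
    case True
    have "y * (d \<bullet> z) \<ge> 0" using True yp by simp
    then show ?thesis using fnn[of z] by linarith
  next
    case False
    then have dz: "d \<bullet> z < 0" by simp
    then have "z \<noteq> 0" by auto
    then have fz: "f z > 0" by (rule fpos)
    define l where "l = c / (d \<bullet> z)"
    have l: "l > 0" using cneg dz by (simp add: l_def divide_neg_neg)
    have lf: "l * f z \<ge> f xs"
    proof (rule ccontr)
      assume "\<not> l * f z \<ge> f xs"
      then have lt: "l * f z < f xs" by simp
      define q where "q = f xs / f z"
      define s where "s = (l + q) / 2"
      have lq: "l < q" using lt fz by (simp add: q_def field_simps)
      have s1: "s > l" using lq s_def by simp
      have s2: "s < f xs / f z" using s_def lq by (simp add: q_def[symmetric])
      have sp: "s > 0" using s1 l by simp
      have "s * f z < f xs" using s2 fz by (simp add: field_simps)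
      have "d \<bullet> (s *\<^sub>R z) = s * (d \<bullet> z)" by simp
      also have "\<dots> < l * (d \<bullet> z)" using s1 dz by (simp add: mult_strict_right_mono_neg)
      also have "\<dots> = c" using dz by (simp add: l_def)
      finally have "f xs \<le> f (s *\<^sub>R z)" using C' c_def by simp
      also have "\<dots> = s * f z" using sp by (simp add: hom)
      finally show False using \<open>s * f z < f xs\<close> by simp
    qed
    have "- y * (d \<bullet> z) = f xs * ((d \<bullet> z) / c)" using cneg by (simp add: y_def field_simps)
    also have "\<dots> \<le> l * f z * ((d \<bullet> z) / c)"
      using lf cneg dz by (intro mult_right_mono) (auto simp: divide_nonpos_neg less_imp_le)
    also have "\<dots> = f z" using cneg dz by (simp add: l_def field_simps)
    finally show ?thesis .
  qed
  have sub_in: "- (y *\<^sub>R d) \<in> subdiff f xs"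
    unfolding subdiff_def
  proof (clarify)
    fix z
    have "f xs + - (y *\<^sub>R d) \<bullet> (z - xs) = f xs - y * (d \<bullet> z) + y * c"
      by (simp add: c_def inner_diff_right algebra_simps)
    also have "y * c = - f xs" using cneg by (simp add: y_def)
    finally show "f xs + - (y *\<^sub>R d) \<bullet> (z - xs) \<le> f z" using main[of z] by simp
  qed
  have "kkt_point f g xs y"
    unfolding kkt_point_def
  proof (intro conjI)
    show "0 \<in> (\<lambda>s. s + y *\<^sub>R grad g xs) ` subdiff f xs"
      by (rule rev_image_eqI[OF sub_in]) (simp add: d_def)
  qed (use yp gxs in auto)
  then show ?thesis by blast
qed

lemma kkt_unique_x:
  assumes "kkt_point f g x1 y1" "kkt_point f g x2 y2"
  shows "x1 = x2"
proof (rule ccontr)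
  assume ne: "x1 \<noteq> x2"
  obtain mu where mu: "mu > 0" "\<And>x y t. 0 \<le> t \<Longrightarrow> t \<le> 1 \<Longrightarrow>
      g (t *\<^sub>R x + (1 - t) *\<^sub>R y) \<le> t * g x + (1 - t) * g y - mu / 2 * t * (1 - t) * (norm (x - y))\<^sup>2"
    using gsc' by blast
  note k1 = kkt_props[OF assms(1)] and k2 = kkt_props[OF assms(2)]
  have feq: "f x1 = f x2" using k1(2,3) k2(2,3) by (metis order.refl order_antisym)
  define m where "m = (1/2) *\<^sub>R x1 + (1 - 1/2) *\<^sub>R x2"
  have "g m \<le> - mu / 8 * (norm (x1 - x2))\<^sup>2"
    using mu(2)[of "1/2" x1 x2] k1(2) k2(2) by (simp add: m_def)
  also have "\<dots> < 0" using mu ne by simp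
  finally have gm: "g m < 0" .
  have "f m \<le> (1/2) * f x1 + (1 - 1/2) * f x2"
    using convex_onD[OF fconv, of "1/2" x2 x1] by (simp add: m_def add.commute)
  then have "f m \<le> f x1" using feq by simp
  then have "\<forall>z. g z \<le> 0 \<longrightarrow> f m \<le> f z" using k1(3) by force
  then show False using interior_min gm by blast
qed

lemma kkt_ex1: "\<exists>!(x, y). kkt_point f g x y"
proof -
  obtain x y where k: "kkt_point f g x y" using kkt_exists by blast
  show ?thesis
  proof (rule ex1I[of _ "(x, y)"])
    show "case (x, y) of (x, y) \<Rightarrow> kkt_point f g x y" using k by simp
  next
    fix q assume "case q of (x, y) \<Rightarrow> kkt_point f g x y"
    then obtain a b where q: "q = (a, b)" and k2: "kkt_point f g a b" by (cases q) auto
    have "a = x" using kkt_unique_x[OF k2 k] .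
    moreover have "b = y" using kkt_props(4)[OF k2] kkt_props(4)[OF k] \<open>a = x\<close> by simp
    ultimately show "q = (x, y)" using q by simp
  qed
qed

end
lemma bn_L2: "block_norm blk i x = L2_set (\<lambda>j. x $ j) {j. blk j = i}"
  by (simp add: block_norm_def L2_set_def)

theorem proposition5:
  fixes B :: nat and blk :: "'n::finite \<Rightarrow> nat" and p :: "nat \<Rightarrow> real"
    and f g :: "real ^ 'n \<Rightarrow> real"
  assumes blocks: "\<forall>j. blk j \<in> {1..B}"
    and p_pos: "\<forall>i\<in>{1..B}. p i > 0"
    and f_def: "\<forall>x. f x = (\<Sum>i=1..B. p i * block_norm blk i x)"
    and g_diff: "\<forall>x. g differentiable (at x)"
    and g_sc: "strongly_convex g"
    and slater: "\<exists>xt. g xt < 0"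
    and minimizers: "\<forall>x0. (\<forall>z. f x0 \<le> f z) \<longrightarrow> g x0 > 0"
  shows "\<exists>!(x, y). kkt_point f g x y"
proof -
  obtain xt where xt: "g xt < 0" using slater by blast
  have bnn: "block_norm blk i x \<ge> 0" for i x by (simp add: block_norm_def sum_nonneg)
  have fnn: "f x \<ge> 0" for x
    using f_def p_pos bnn by (auto intro!: sum_nonneg)
  have hom: "f (c *\<^sub>R x) = \<bar>c\<bar> * f x" for c x
  proof -
    have "block_norm blk i (c *\<^sub>R x) = \<bar>c\<bar> * block_norm blk i x" for i
    proof -
      have "(\<Sum>j\<in>{j. blk j = i}. ((c *\<^sub>R x) $ j)\<^sup>2) = c\<^sup>2 * (\<Sum>j\<in>{j. blk j = i}. (x $ j)\<^sup>2)"
        by (simp add: sum_distrib_left power_mult_distrib)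
      then show ?thesis by (simp add: block_norm_def real_sqrt_mult)
    qed
    then show ?thesis using f_def by (simp add: sum_distrib_left algebra_simps)
  qed
  have sub: "f (x + y) \<le> f x + f y" for x y
  proof -
    have "(\<Sum>i=1..B. p i * block_norm blk i (x + y)) \<le> (\<Sum>i=1..B. p i * block_norm blk i x + p i * block_norm blk i y)"
    proof (rule sum_mono)
      fix i assume i: "i \<in> {1..B}"
      have "block_norm blk i (x + y) \<le> block_norm blk i x + block_norm blk i y"
      proof -
        have e: "(\<lambda>j. (x + y) $ j) = (\<lambda>j. x $ j + y $ j)" by auto
        show ?thesis unfolding bn_L2 e
          by (rule L2_set_triangle_ineq[of "\<lambda>j. x $ j" "\<lambda>j. y $ j"])
      qed
      then show "p i * block_norm blk i (x + y) \<le> p i * block_norm blk i x + p i * block_norm blk i y"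
        using p_pos i by (simp add: distrib_left[symmetric])
    qed
    then show ?thesis using f_def by (simp add: sum.distrib)
  qed
  have pos0: "x = 0" if fx: "f x = 0" for x
  proof -
    have nn: "\<And>i. i \<in> {1..B} \<Longrightarrow> p i * block_norm blk i x \<ge> 0"
      using p_pos bnn by (simp add: less_imp_le)
    have "(\<Sum>i=1..B. p i * block_norm blk i x) = 0" using fx f_def by simp
    then have "\<forall>i\<in>{1..B}. p i * block_norm blk i x = 0"
      using sum_nonneg_eq_0_iff[of "{1..B}" "\<lambda>i. p i * block_norm blk i x"] nn by simp
    then have bz: "block_norm blk i x = 0" if "i \<in> {1..B}" for i
      using p_pos that by (metis less_irrefl mult_eq_0_iff)
    show ?thesis
    proof (rule vec_eq_iff[THEN iffD2, rule_format])
      fix j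
      have "L2_set (\<lambda>j. x $ j) {j'. blk j' = blk j} = 0" using bz[of "blk j"] blocks bn_L2 by metis
      then show "x $ j = 0 $ j" by (subst (asm) L2_set_eq_0_iff) auto
    qed
  qed
  have feq: "f = (\<lambda>x. \<Sum>i=1..B. p i * sqrt (\<Sum>j\<in>{j. blk j = i}. (x $ j)\<^sup>2))"
    using f_def by (auto simp: block_norm_def)
  have fcont: "continuous_on UNIV f"
    unfolding feq by (intro continuous_intros)
  have f0: "f 0 = 0" using hom[of 0 0] by simp
  have g0: "g 0 > 0" using minimizers f0 fnn by auto
  show ?thesis
    using kkt_ex1[of f g xt] hom sub pos0 fcont g_diff g_sc xt g0 by blast
qed

end
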